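(* Let $M=\mathbb{R}/\mathbb{Z}$ with metric $d_M(x,y)=\inf|\tilde x-\tilde y|$ over representatives, $\pi_M:\mathbb{R}\to M$ the projection and $I_0=\pi_M([\tfrac14,\tfrac34])$. Let $f_0:M\to M$ be a $\mathscr{C}^r$ diffeomorphism ($r\ge1$) with $f_0(x)=\tfrac12x+\tfrac14\bmod1$ on $I_0$. Let $\Omega$ be a set, $\theta:\Omega\to\Omega$ a map, $\kappa:\Omega\to[-1,1]$ a function, $0<\epsilon<\tfrac18$, $f_\omega(x)=f_0(x)+\epsilon\kappa(\omega)\bmod1$, and $f^{(n)}_\omega=f_{\theta^{n-1}\omega}\circ\cdots\circ f_\omega$ ($f^{(0)}_\omega=\mathrm{id}_M$). For $\omega\in\Omega$ let $X_\omega$ be the unique fixed point of $f_\omega|_{I_0}:I_0\to I_0$ (namely $X_\omega=\pi_M(\tfrac12+2\epsilon\kappa(\omega))$). Then for all $n\in\mathbb{N}_0$, $x\in I_0$ and $\omega,\omega'\in\Omega$, $$d_M\bigl(f^{(n)}_\omega(x),X_{\omega'}\bigr)\le\frac1{2^n}+6\epsilon\max_{0\le j\le n-1}\bigl|\kappa(\theta^j\omega)-\kappa(\omega')\bigr|.$$ *)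

theory Defs
  imports "HOL-Analysis.Analysis"
begin

text \<open>The circle M = R/Z. Points of M are represented by their unique
representative in [0,1); the projection pi_M is frac.\<close>

definition circle_proj :: "real \<Rightarrow> real" where
  "circle_proj x = frac x"

definition circle_dist :: "real \<Rightarrow> real \<Rightarrow> real" where
  "circle_dist x y = (INF k::int. \<bar>x - y - of_int k\<bar>)"

definition I0 :: "real set" where
  "I0 = circle_proj ` {1/4..3/4}"

fun Cr :: "nat \<Rightarrow> (real \<Rightarrow> real) \<Rightarrow> bool" where
  "Cr 0 F = continuous_on UNIV F"
| "Cr (Suc k) F = ((\<forall>x. F differentiable (at x)) \<and> Cr k (deriv F))"

text \<open>A map f : M -> M (given on representatives in [0,1)) is a C^r
diffeomorphism iff it has a C^r lift F : R -> R of degree +-1 with nowhere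
vanishing derivative.\<close>
definition circle_Cr_diffeo :: "nat \<Rightarrow> (real \<Rightarrow> real) \<Rightarrow> bool" where
  "circle_Cr_diffeo r f \<longleftrightarrow>
     (\<exists>F. Cr r F \<and>
          ((\<forall>x. F (x + 1) = F x + 1) \<or> (\<forall>x. F (x + 1) = F x - 1)) \<and>
          (\<forall>x. deriv F x \<noteq> 0) \<and>
          (\<forall>x\<in>{0..<1}. f x = circle_proj (F x)))"

definition fom :: "(real \<Rightarrow> real) \<Rightarrow> real \<Rightarrow> ('a \<Rightarrow> real) \<Rightarrow> 'a \<Rightarrow> real \<Rightarrow> real" where
  "fom f0 eps kappa \<omega> x = circle_proj (f0 x + eps * kappa \<omega>)"

fun fiter :: "('a \<Rightarrow> real \<Rightarrow> real) \<Rightarrow> ('a \<Rightarrow> 'a) \<Rightarrow> nat \<Rightarrow> 'a \<Rightarrow> real \<Rightarrow> real" where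
  "fiter f \<theta> 0 \<omega> = id"
| "fiter f \<theta> (Suc n) \<omega> = fiter f \<theta> n (\<theta> \<omega>) \<circ> f \<omega>"

definition Xfix :: "(real \<Rightarrow> real) \<Rightarrow> real \<Rightarrow> ('a \<Rightarrow> real) \<Rightarrow> 'a \<Rightarrow> real" where
  "Xfix f0 eps kappa \<omega> = (THE x. x \<in> I0 \<and> fom f0 eps kappa \<omega> x = x)"

end

theory Submission
  imports Defs
begin

lemma I0_eq: "I0 = {1/4..3/4}"
proof -
  have "circle_proj ` {1/4..3/4} = (\<lambda>x. x) ` {1/4..(3/4::real)}"
    by (rule image_cong) (auto simp: circle_proj_def frac_eq)
  thus ?thesis by (simp add: I0_def)
qed

lemma circle_dist_le: "circle_dist a b \<le> \<bar>a - b\<bar>"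
proof -
  have "(INF k::int. \<bar>a - b - of_int k\<bar>) \<le> \<bar>a - b - of_int 0\<bar>"
    by (rule cINF_lower) (auto intro: bdd_belowI[where m=0])
  thus ?thesis by (simp add: circle_dist_def)
qed

lemma fiter_Suc': "fiter f \<theta> (Suc n) \<omega> = f ((\<theta>^^n) \<omega>) \<circ> fiter f \<theta> n \<omega>"
proof (induction n arbitrary: \<omega>)
  case 0 then show ?case by simp
next
  case (Suc n)
  have "fiter f \<theta> (Suc (Suc n)) \<omega> = fiter f \<theta> (Suc n) (\<theta> \<omega>) \<circ> f \<omega>" by simp
  also have "\<dots> = f ((\<theta>^^n) (\<theta> \<omega>)) \<circ> fiter f \<theta> n (\<theta> \<omega>) \<circ> f \<omega>" by (simp only: Suc.IH[of "\<theta> \<omega>"])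
  also have "(\<theta>^^n) (\<theta> \<omega>) = (\<theta>^^Suc n) \<omega>" by (simp add: funpow_swap1)
  finally show ?case by (simp add: o_assoc)
qed

theorem lemma2p1:
  fixes r :: nat and f0 :: "real \<Rightarrow> real" and \<theta> :: "'a \<Rightarrow> 'a"
    and \<kappa> :: "'a \<Rightarrow> real" and \<epsilon> :: real
  assumes "r \<ge> 1"
    and "circle_Cr_diffeo r f0"
    and "\<forall>x\<in>I0. f0 x = circle_proj (x / 2 + 1 / 4)"
    and "\<forall>\<omega>. \<kappa> \<omega> \<in> {-1..1}"
    and "0 < \<epsilon>" and "\<epsilon> < 1 / 8"
  shows "\<forall>n::nat. \<forall>x\<in>I0. \<forall>\<omega> \<omega>'.
    circle_dist (fiter (fom f0 \<epsilon> \<kappa>) \<theta> n \<omega> x) (Xfix f0 \<epsilon> \<kappa> \<omega>')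
      \<le> 1 / 2 ^ n + 6 * \<epsilon> * Max (insert 0 {\<bar>\<kappa> ((\<theta> ^^ j) \<omega>) - \<kappa> \<omega>'\<bar> | j. j < n})"
proof (intro allI ballI)
  fix n :: nat and x \<omega> \<omega>'
  assume x: "x \<in> I0"
  have kb: "\<And>w. -1 \<le> \<kappa> w \<and> \<kappa> w \<le> 1" using assms(4) by auto
  have fomI: "fom f0 \<epsilon> \<kappa> w y = y/2 + 1/4 + \<epsilon> * \<kappa> w \<and> fom f0 \<epsilon> \<kappa> w y \<in> I0"
    if y: "y \<in> I0" for w y
  proof -
    have y': "1/4 \<le> y" "y \<le> 3/4" using y by (auto simp: I0_eq)
    have "f0 y = y/2 + 1/4" using assms(3) y y'
      by (simp add: circle_proj_def frac_eq)
    moreover have "-\<epsilon> \<le> \<epsilon> * \<kappa> w" "\<epsilon> * \<kappa> w \<le> \<epsilon>"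
      using kb[of w] assms(5) by (smt (verit, best) mult_left_le mult_minus_right)+
    ultimately have "f0 y + \<epsilon> * \<kappa> w = y/2 + 1/4 + \<epsilon> * \<kappa> w"
      "1/4 \<le> y/2 + 1/4 + \<epsilon> * \<kappa> w" "y/2 + 1/4 + \<epsilon> * \<kappa> w \<le> 3/4"
      using y' assms(5,6) by linarith+
    moreover have "frac (y/2 + 1/4 + \<epsilon> * \<kappa> w) = y/2 + 1/4 + \<epsilon> * \<kappa> w"
      using calculation(2,3) by (simp add: frac_eq)
    ultimately show ?thesis by (simp add: fom_def circle_proj_def I0_eq)
  qed
  define X where "X = 1/2 + 2 * \<epsilon> * \<kappa> \<omega>'"
  have XI: "X \<in> I0"
  proof -
    have a: "-\<epsilon> \<le> \<epsilon> * \<kappa> \<omega>'" using kb[of \<omega>'] assms(5)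
      by (smt (verit, best) mult_left_le mult_minus_right)
    have b: "\<epsilon> * \<kappa> \<omega>' \<le> \<epsilon>" using kb[of \<omega>'] assms(5)
      by (smt (verit, best) mult_left_le mult_minus_right)
    have "1/4 \<le> X" "X \<le> 3/4" using a b assms(5,6) unfolding X_def by linarith+
    then show ?thesis by (simp add: I0_eq)
  qed
  have Xeq: "Xfix f0 \<epsilon> \<kappa> \<omega>' = X"
    unfolding Xfix_def
  proof (rule the_equality)
    show "X \<in> I0 \<and> fom f0 \<epsilon> \<kappa> \<omega>' X = X" using XI fomI[OF XI, of \<omega>'] by (simp add: X_def field_simps)
  next
    fix y assume "y \<in> I0 \<and> fom f0 \<epsilon> \<kappa> \<omega>' y = y"
    then show "y = X" using fomI[of y \<omega>'] by (simp add: X_def field_simps)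
  qed
  define M where "M m = Max (insert 0 ((\<lambda>j. \<bar>\<kappa> ((\<theta> ^^ j) \<omega>) - \<kappa> \<omega>'\<bar>) ` {..<m}))" for m
  have Mset: "{\<bar>\<kappa> ((\<theta> ^^ j) \<omega>) - \<kappa> \<omega>'\<bar> | j. j < m} = (\<lambda>j. \<bar>\<kappa> ((\<theta> ^^ j) \<omega>) - \<kappa> \<omega>'\<bar>) ` {..<m}" for m
    by auto
  have M0: "0 \<le> M m" for m unfolding M_def by (rule Max_ge) auto
  have Mmono: "M m \<le> M (Suc m)" for m unfolding M_def
    by (rule Max_mono) auto
  have Ma: "\<bar>\<kappa> ((\<theta> ^^ m) \<omega>) - \<kappa> \<omega>'\<bar> \<le> M (Suc m)" for m unfolding M_def
    by (rule Max_ge) auto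
  let ?x = "\<lambda>m. fiter (fom f0 \<epsilon> \<kappa>) \<theta> m \<omega> x"
  have key: "?x m \<in> I0 \<and> \<bar>?x m - X\<bar> \<le> \<bar>x - X\<bar> / 2^m + 2 * \<epsilon> * M m" for m
  proof (induction m)
    case 0 then show ?case using x M0[of 0] assms(5) by simp
  next
    case (Suc m)
    have xm: "?x m \<in> I0" using Suc by simp
    have e: "?x (Suc m) = ?x m / 2 + 1/4 + \<epsilon> * \<kappa> ((\<theta>^^m) \<omega>)"
      "?x (Suc m) \<in> I0"
      using fomI[OF xm, of "(\<theta>^^m) \<omega>"] unfolding fiter_Suc' o_apply by metis+
    have "?x (Suc m) - X = (?x m - X)/2 + \<epsilon> * (\<kappa> ((\<theta>^^m) \<omega>) - \<kappa> \<omega>')"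
    proof -
      have gen: "a - (1/2 + 2*\<epsilon>*k') = (b - (1/2 + 2*\<epsilon>*k'))/2 + \<epsilon> * (k - k')"
        if "a = b/2 + 1/4 + \<epsilon> * k" for a b k k' :: real using that by (simp add: field_simps)
      show ?thesis unfolding X_def by (rule gen[OF e(1)])
    qed
    hence "\<bar>?x (Suc m) - X\<bar> \<le> \<bar>?x m - X\<bar>/2 + \<epsilon> * \<bar>\<kappa> ((\<theta>^^m) \<omega>) - \<kappa> \<omega>'\<bar>"
    proof -
      have gen: "\<bar>p\<bar> \<le> \<bar>q\<bar>/2 + \<epsilon> * \<bar>d\<bar>" if "p = q/2 + \<epsilon> * d" for p q d :: real
      proof -
        have "\<bar>q/2 + \<epsilon> * d\<bar> \<le> \<bar>q/2\<bar> + \<bar>\<epsilon> * d\<bar>" by (rule abs_triangle_ineq)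
        also have "\<dots> = \<bar>q\<bar>/2 + \<epsilon> * \<bar>d\<bar>" using assms(5) by (simp add: abs_mult)
        finally show ?thesis using that by simp
      qed
      show ?thesis by (rule gen) fact
    qed
    also have "\<dots> \<le> (\<bar>x - X\<bar> / 2^m + 2 * \<epsilon> * M m)/2 + \<epsilon> * M (Suc m)"
    proof (rule add_mono)
      show "\<bar>?x m - X\<bar>/2 \<le> (\<bar>x - X\<bar> / 2^m + 2 * \<epsilon> * M m)/2"
        using Suc.IH by (intro divide_right_mono) auto
      show "\<epsilon> * \<bar>\<kappa> ((\<theta>^^m) \<omega>) - \<kappa> \<omega>'\<bar> \<le> \<epsilon> * M (Suc m)"
        using assms(5) Ma[of m] by (intro mult_left_mono) auto
    qed
    also have "\<dots> \<le> \<bar>x - X\<bar> / 2^Suc m + 2 * \<epsilon> * M (Suc m)"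
      using Mmono[of m] assms(5) by (simp add: field_simps)
    finally show ?case using e(2) by simp
  qed
  have dx: "\<bar>x - X\<bar> \<le> 1/2" using x XI by (auto simp: I0_eq abs_if)
  have "circle_dist (?x n) (Xfix f0 \<epsilon> \<kappa> \<omega>') \<le> \<bar>?x n - X\<bar>"
    using circle_dist_le Xeq by simp
  also have "\<dots> \<le> \<bar>x - X\<bar> / 2^n + 2 * \<epsilon> * M n" using key by blast
  also have "\<dots> \<le> 1 / 2^n + 6 * \<epsilon> * M n"
    using dx M0[of n] assms(5) by (intro add_mono divide_right_mono) auto
  finally show "circle_dist (?x n) (Xfix f0 \<epsilon> \<kappa> \<omega>')
      \<le> 1 / 2 ^ n + 6 * \<epsilon> * Max (insert 0 {\<bar>\<kappa> ((\<theta> ^^ j) \<omega>) - \<kappa> \<omega>'\<bar> | j. j < n})"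
    by (simp add: Mset M_def)
qed

end
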